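(* Let $V$ be the value function defined in the context (the limit of relative value iteration). For any $\mathbf Q^1,\mathbf Q^2\in\mathcal Q$ with $\mathbf Q^2\succeq\mathbf Q^1$ (componentwise $\ge$), we have $V(\mathbf Q^2)\ge V(\mathbf Q^1)$.
   Context: Model. Let $N\ge 1$, $\mathcal N=\{0,1,\dots,N\}$ (base station $0$ is the macro base station, MBS) and $\mathcal N^+=\{1,\dots,N\}$ (small base stations, SBSs). Let $\mathcal M=\{1,\dots,M\}$ be the set of contents. For each $n\in\mathcal N$ let $\mathcal M_n\subseteq\mathcal M$ be the set of contents cached at BS $n$, with $\mathcal M_0=\mathcal M$; put $\tilde{\mathcal M}_n=\mathcal M_n\cup\{0\}$ and $\mathcal N_m=\{n\in\mathcal N^+: m\in\mathcal M_n\}$. Powers $p(n,m)\ge 0$ are given for $n\in\mathcal N$, $m\in\mathcal M_n$, and $p(n,0)=0$. A weight $w\ge 0$ is fixed. The feasible action space is $\mathcal U=\{\mathbf u=(u_n)_{n\in\mathcal N}: u_n\in\tilde{\mathcal M}_n\ \forall n,\ u_0\sum_{n\in\mathcal N^+}u_n=0\}$. A state is $\mathbf Q=(Q_{n,m})_{n\in\mathcal N,m\in\mathcal M_n}$ with $Q_{n,m}\in\mathcal Q_{n,m}=\{0,1,\dots,N_{n,m}\}$ for given positive integers $N_{n,m}$; $\mathcal Q=\prod_{n\in\mathcal N}\prod_{m\in\mathcal M_n}\mathcal Q_{n,m}$. Arrivals $A_{n,m}$ ($n\in\mathcal N$, $m\in\mathcal M$) are mutually independent nonnegative-integer random variables with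 fixed distributions, i.i.d. across time slots; $\tilde A_{0,m}=A_{0,m}+\sum_{n\in\mathcal N^+\setminus\mathcal N_m}A_{n,m}$. Given state $\mathbf Q$ and action $\mathbf u$, the next state $\mathbf Q'$ is $Q'_{0,m}=\min\{\mathbf 1(u_0\neq m)Q_{0,m}+\tilde A_{0,m},N_{0,m}\}$ for $m\in\mathcal M_0$ and $Q'_{n,m}=\min\{\mathbf 1(u_0\neq m\text{ and }u_n\neq m)Q_{n,m}+A_{n,m},N_{n,m}\}$ for $n\in\mathcal N^+$, $m\in\mathcal M_n$; $\mathbb E$ denotes expectation over the arrivals. The per-stage cost is $g(\mathbf Q,\mathbf u)=d(\mathbf Q)+w\,p(\mathbf u)$ with $d(\mathbf Q)=\sum_{n\in\mathcal N}\sum_{m\in\mathcal M_n}Q_{n,m}$ and $p(\mathbf u)=\sum_{n\in\mathcal N}p(n,u_n)$. Value function. Fix a reference state $\mathbf Q^\dagger\in\mathcal Q$. Relative value iteration: $V_0\equiv 0$, $J_{l+1}(\mathbf Q,\mathbf u)=g(\mathbf Q,\mathbf u)+\mathbb E[V_l(\mathbf Q')]$, and $V_{l+1}(\mathbf Q)=\min_{\mathbf u\in\mathcal U}J_{l+1}(\mathbf Q,\mathbf u)-\min_{\mathbf u\in\mathcal U}J_{l+1}(\mathbf Q^\dagger,\mathbf u)$ for $l\ge0$. It is assumed (standing assumption of the paper, guaranteed under its unichain conditions) that $V_l$ converges pointwise to a function $V:\mathcal Q\to\mathbb R$; this $V$ is the value function, which solves the Bellman equation $\theta+V(\mathbf Q)=\min_{\mathbf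 u\in\mathcal U}\{g(\mathbf Q,\mathbf u)+\mathbb E[V(\mathbf Q')]\}$ for all $\mathbf Q$. *)

theory Defs
  imports "HOL-Probability.Probability"
begin

text \<open>Base stations are 0..N (0 = MBS), contents are 1..M. Mc n is the cache set of BS n.
  Actions are functions u :: nat => nat (u n for n <= N; 0 = idle), states are
  functions Q :: nat => nat => nat (Q n m for n <= N, m in Mc n); outside the meaningful
  index range both are fixed to 0 so that the action and state spaces are finite.\<close>

definition Acts :: "nat \<Rightarrow> (nat \<Rightarrow> nat set) \<Rightarrow> (nat \<Rightarrow> nat) set" where
  "Acts N Mc = {u. (\<forall>n\<le>N. u n \<in> Mc n \<union> {0}) \<and> (\<forall>n>N. u n = 0)
                   \<and> u 0 * (\<Sum>n\<in>{1..N}. u n) = 0}"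

definition States :: "nat \<Rightarrow> (nat \<Rightarrow> nat set) \<Rightarrow> (nat \<Rightarrow> nat \<Rightarrow> nat) \<Rightarrow> (nat \<Rightarrow> nat \<Rightarrow> nat) set" where
  "States N Mc Nb = {Q. (\<forall>n m. n \<le> N \<and> m \<in> Mc n \<longrightarrow> Q n m \<le> Nb n m)
                      \<and> (\<forall>n m. \<not> (n \<le> N \<and> m \<in> Mc n) \<longrightarrow> Q n m = 0)}"

definition arrivals :: "nat \<Rightarrow> nat \<Rightarrow> (nat \<Rightarrow> nat \<Rightarrow> nat pmf) \<Rightarrow> (nat \<times> nat \<Rightarrow> nat) pmf" where
  "arrivals N M Adist = Pi_pmf ({0..N} \<times> {1..M}) 0 (\<lambda>(n, m). Adist n m)"

definition Atil :: "nat \<Rightarrow> (nat \<Rightarrow> nat set) \<Rightarrow> (nat \<times> nat \<Rightarrow> nat) \<Rightarrow> nat \<Rightarrow> nat" where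
  "Atil N Mc A m = A (0, m) + (\<Sum>n\<in>{n\<in>{1..N}. m \<notin> Mc n}. A (n, m))"

definition nxt :: "nat \<Rightarrow> (nat \<Rightarrow> nat set) \<Rightarrow> (nat \<Rightarrow> nat \<Rightarrow> nat) \<Rightarrow> (nat \<Rightarrow> nat \<Rightarrow> nat)
                   \<Rightarrow> (nat \<Rightarrow> nat) \<Rightarrow> (nat \<times> nat \<Rightarrow> nat) \<Rightarrow> (nat \<Rightarrow> nat \<Rightarrow> nat)" where
  "nxt N Mc Nb Q u A = (\<lambda>n m.
     if n = 0 \<and> m \<in> Mc 0 then min ((if u 0 \<noteq> m then Q 0 m else 0) + Atil N Mc A m) (Nb 0 m)
     else if 1 \<le> n \<and> n \<le> N \<and> m \<in> Mc n then
       min ((if u 0 \<noteq> m \<and> u n \<noteq> m then Q n m else 0) + A (n, m)) (Nb n m)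
     else 0)"

definition dcost :: "nat \<Rightarrow> (nat \<Rightarrow> nat set) \<Rightarrow> (nat \<Rightarrow> nat \<Rightarrow> nat) \<Rightarrow> real" where
  "dcost N Mc Q = real (\<Sum>n\<le>N. \<Sum>m\<in>Mc n. Q n m)"

definition pcost :: "nat \<Rightarrow> (nat \<Rightarrow> nat \<Rightarrow> real) \<Rightarrow> (nat \<Rightarrow> nat) \<Rightarrow> real" where
  "pcost N p u = (\<Sum>n\<le>N. p n (u n))"

definition stage_cost :: "nat \<Rightarrow> (nat \<Rightarrow> nat set) \<Rightarrow> (nat \<Rightarrow> nat \<Rightarrow> real) \<Rightarrow> real
                          \<Rightarrow> (nat \<Rightarrow> nat \<Rightarrow> nat) \<Rightarrow> (nat \<Rightarrow> nat) \<Rightarrow> real" where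
  "stage_cost N Mc p w Q u = dcost N Mc Q + w * pcost N p u"

primrec rvi :: "nat \<Rightarrow> nat \<Rightarrow> (nat \<Rightarrow> nat set) \<Rightarrow> (nat \<Rightarrow> nat \<Rightarrow> nat) \<Rightarrow> (nat \<Rightarrow> nat \<Rightarrow> nat pmf)
                \<Rightarrow> (nat \<Rightarrow> nat \<Rightarrow> real) \<Rightarrow> real \<Rightarrow> (nat \<Rightarrow> nat \<Rightarrow> nat) \<Rightarrow> nat
                \<Rightarrow> (nat \<Rightarrow> nat \<Rightarrow> nat) \<Rightarrow> real" where
  "rvi N M Mc Nb Adist p w Qd 0 = (\<lambda>Q. 0)"
| "rvi N M Mc Nb Adist p w Qd (Suc l) =
     (let J = (\<lambda>Q u. stage_cost N Mc p w Q u
                 + measure_pmf.expectation (arrivals N M Adist)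
                     (\<lambda>A. rvi N M Mc Nb Adist p w Qd l (nxt N Mc Nb Q u A)))
      in (\<lambda>Q. Min (J Q ` Acts N Mc) - Min (J Qd ` Acts N Mc)))"

end

theory Submission
  imports Defs
begin

lemma finite_States:
  assumes "\<forall>n\<le>N. finite (Mc n)"
  shows "finite (States N Mc Nb)"
proof -
  define S where "S = (SIGMA n:{..N}. Mc n)"
  have fS: "finite S" unfolding S_def using assms by auto
  define K where "K = (\<Sum>x\<in>S. Nb (fst x) (snd x))"
  define F where "F = {f :: nat\<times>nat\<Rightarrow>nat. \<forall>x. (x \<in> S \<longrightarrow> f x \<in> {0..K}) \<and> (x \<notin> S \<longrightarrow> f x = 0)}"
  have fF: "finite F" unfolding F_def by (rule finite_set_of_finite_funs) (use fS in auto)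
  have sub: "case_prod ` States N Mc Nb \<subseteq> F"
  proof
    fix g assume "g \<in> case_prod ` States N Mc Nb"
    then obtain Q where Q: "Q \<in> States N Mc Nb" and g: "g = case_prod Q" by auto
    show "g \<in> F" unfolding F_def
    proof (intro CollectI allI conjI impI)
      fix x assume xS: "x \<in> S"
      obtain n m where x: "x = (n,m)" by force
      have "Q n m \<le> Nb n m" using Q xS x unfolding States_def S_def by auto
      also have "Nb n m \<le> K" unfolding K_def using member_le_sum[OF xS _ fS, of "\<lambda>x. Nb (fst x) (snd x)"] x by simp
      finally show "g x \<in> {0..K}" using g x by simp
    next
      fix x assume xS: "x \<notin> S"
      obtain n m where x: "x = (n,m)" by force
      show "g x = 0" using Q xS x g unfolding States_def S_def by auto
    qed
  qed
  have inj: "inj_on case_prod (States N Mc Nb)"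
    by (rule inj_onI) (metis curry_case_prod)
  show ?thesis using finite_subset[OF sub fF] finite_imageD inj by blast
qed

lemma finite_Acts:
  assumes "\<forall>n\<le>N. Mc n \<subseteq> {1..M}"
  shows "finite (Acts N Mc)"
proof -
  have "Acts N Mc \<subseteq> {u. \<forall>x. (x \<in> {..N} \<longrightarrow> u x \<in> {0..M}) \<and> (x \<notin> {..N} \<longrightarrow> u x = 0)}"
  proof (intro subsetI CollectI allI conjI impI)
    fix u x assume u: "u \<in> Acts N Mc"
    { assume "x \<in> {..N}"
      then have "x \<le> N" by simp
      then have "u x \<in> Mc x \<union> {0}" and "Mc x \<subseteq> {1..M}" using u assms unfolding Acts_def by auto
      then show "u x \<in> {0..M}" by auto }
    { assume "x \<notin> {..N}"
      then show "u x = 0" using u unfolding Acts_def by auto }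
  qed
  moreover have "finite {u. \<forall>x. (x \<in> {..N} \<longrightarrow> u x \<in> {0..M}) \<and> (x \<notin> {..N} \<longrightarrow> u x = (0::nat))}"
    by (rule finite_set_of_finite_funs) auto
  ultimately show ?thesis using finite_subset by blast
qed

lemma zero_Acts: "(\<lambda>_. 0) \<in> Acts N Mc"
  unfolding Acts_def by auto

lemma nxt_States: "nxt N Mc Nb Q u A \<in> States N Mc Nb"
  unfolding States_def nxt_def by auto

lemma nxt_mono:
  assumes "\<forall>n\<le>N. \<forall>m\<in>Mc n. Q1 n m \<le> Q2 n m"
  shows "\<forall>n\<le>N. \<forall>m\<in>Mc n. nxt N Mc Nb Q1 u A n m \<le> nxt N Mc Nb Q2 u A n m"
proof (intro allI impI ballI)
  fix n m assume n: "n \<le> N" and m: "m \<in> Mc n"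
  have le: "Q1 n m \<le> Q2 n m" using assms n m by blast
  show "nxt N Mc Nb Q1 u A n m \<le> nxt N Mc Nb Q2 u A n m"
  proof (cases "n = 0")
    case True
    then show ?thesis using le m unfolding nxt_def by (simp add: min_def)
  next
    case False
    then show ?thesis using le m n unfolding nxt_def by (simp add: min_def)
  qed
qed

lemma dcost_mono:
  assumes "\<forall>n\<le>N. \<forall>m\<in>Mc n. Q1 n m \<le> Q2 n m"
  shows "dcost N Mc Q1 \<le> dcost N Mc Q2"
proof -
  have "(\<Sum>n\<le>N. \<Sum>m\<in>Mc n. Q1 n m) \<le> (\<Sum>n\<le>N. \<Sum>m\<in>Mc n. Q2 n m)"
    by (intro sum_mono) (use assms in auto)
  then show ?thesis unfolding dcost_def by (simp only: of_nat_le_iff)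
qed

lemma rvi_mono:
  assumes fin: "\<forall>n\<le>N. Mc n \<subseteq> {1..M}"
  shows "\<forall>Q1\<in>States N Mc Nb. \<forall>Q2\<in>States N Mc Nb. (\<forall>n\<le>N. \<forall>m\<in>Mc n. Q1 n m \<le> Q2 n m)
           \<longrightarrow> rvi N M Mc Nb Adist p w Qd l Q1 \<le> rvi N M Mc Nb Adist p w Qd l Q2"
proof (induction l)
  case 0
  then show ?case by simp
next
  case (Suc l)
  have finMc: "\<forall>n\<le>N. finite (Mc n)" using fin by (meson finite_atLeastAtMost finite_subset)
  have fS: "finite (States N Mc Nb)" by (rule finite_States[OF finMc])
  let ?r = "rvi N M Mc Nb Adist p w Qd l"
  define B where "B = (\<Sum>Q\<in>States N Mc Nb. \<bar>?r Q\<bar>)"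
  have bnd: "\<bar>?r Q\<bar> \<le> B" if "Q \<in> States N Mc Nb" for Q
    unfolding B_def using member_le_sum[OF that _ fS, of "\<lambda>Q. \<bar>?r Q\<bar>"] by simp
  have integ: "integrable (measure_pmf (arrivals N M Adist)) (\<lambda>A. ?r (nxt N Mc Nb Q u A))" for Q u
    by (rule measure_pmf.integrable_const_bound[where B=B]) (auto intro: bnd nxt_States)
  define J where "J = (\<lambda>Q u. stage_cost N Mc p w Q u
                 + measure_pmf.expectation (arrivals N M Adist) (\<lambda>A. ?r (nxt N Mc Nb Q u A)))"
  show ?case
  proof (intro ballI impI)
    fix Q1 Q2 assume Q1: "Q1 \<in> States N Mc Nb" and Q2: "Q2 \<in> States N Mc Nb"
      and le: "\<forall>n\<le>N. \<forall>m\<in>Mc n. Q1 n m \<le> Q2 n m"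
    have Jle: "J Q1 u \<le> J Q2 u" for u
    proof -
      have "stage_cost N Mc p w Q1 u \<le> stage_cost N Mc p w Q2 u"
        unfolding stage_cost_def using dcost_mono[OF le] by simp
      moreover have "measure_pmf.expectation (arrivals N M Adist) (\<lambda>A. ?r (nxt N Mc Nb Q1 u A))
          \<le> measure_pmf.expectation (arrivals N M Adist) (\<lambda>A. ?r (nxt N Mc Nb Q2 u A))"
        by (rule integral_mono[OF integ integ]) (use Suc.IH nxt_States nxt_mono[OF le] in blast)
      ultimately show ?thesis unfolding J_def by simp
    qed
    have fA: "finite (Acts N Mc)" by (rule finite_Acts[OF fin])
    have ne: "Acts N Mc \<noteq> {}" using zero_Acts by blast
    have "Min (J Q1 ` Acts N Mc) \<le> Min (J Q2 ` Acts N Mc)"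
    proof -
      have "Min (J Q2 ` Acts N Mc) \<in> J Q2 ` Acts N Mc" using Min_in fA ne by blast
      then obtain u where u: "u \<in> Acts N Mc" "Min (J Q2 ` Acts N Mc) = J Q2 u"
        by blast
      have "Min (J Q1 ` Acts N Mc) \<le> J Q1 u" using fA u(1) by simp
      also have "\<dots> \<le> J Q2 u" by (rule Jle)
      finally show ?thesis using u(2) by simp
    qed
    then show "rvi N M Mc Nb Adist p w Qd (Suc l) Q1 \<le> rvi N M Mc Nb Adist p w Qd (Suc l) Q2"
      by (simp add: J_def Let_def)
  qed
qed

theorem lemma2:
  fixes N M :: nat and Mc :: "nat \<Rightarrow> nat set" and Nb :: "nat \<Rightarrow> nat \<Rightarrow> nat"
    and Adist :: "nat \<Rightarrow> nat \<Rightarrow> nat pmf" and p :: "nat \<Rightarrow> nat \<Rightarrow> real" and w :: real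
    and Qd :: "nat \<Rightarrow> nat \<Rightarrow> nat" and V :: "(nat \<Rightarrow> nat \<Rightarrow> nat) \<Rightarrow> real"
    and Q1 Q2 :: "nat \<Rightarrow> nat \<Rightarrow> nat"
  assumes "N \<ge> 1"
    and "Mc 0 = {1..M}"
    and "\<forall>n\<le>N. Mc n \<subseteq> {1..M}"
    and "\<forall>n\<le>N. \<forall>m\<in>Mc n. Nb n m > 0"
    and "\<forall>n\<le>N. \<forall>m\<in>Mc n. p n m \<ge> 0"
    and "\<forall>n\<le>N. p n 0 = 0"
    and "w \<ge> 0"
    and "Qd \<in> States N Mc Nb"
    and "\<forall>Q\<in>States N Mc Nb. (\<lambda>l. rvi N M Mc Nb Adist p w Qd l Q) \<longlonglongrightarrow> V Q"
    and "Q1 \<in> States N Mc Nb" and "Q2 \<in> States N Mc Nb"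
    and "\<forall>n\<le>N. \<forall>m\<in>Mc n. Q1 n m \<le> Q2 n m"
  shows "V Q2 \<ge> V Q1"
proof (rule LIMSEQ_le)
  show "(\<lambda>l. rvi N M Mc Nb Adist p w Qd l Q1) \<longlonglongrightarrow> V Q1" using assms(9,10) by blast
  show "(\<lambda>l. rvi N M Mc Nb Adist p w Qd l Q2) \<longlonglongrightarrow> V Q2" using assms(9,11) by blast
  show "\<exists>N'. \<forall>l\<ge>N'. rvi N M Mc Nb Adist p w Qd l Q1 \<le> rvi N M Mc Nb Adist p w Qd l Q2"
    using rvi_mono[OF assms(3)] assms(10,11,12) by blast
qed

end
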